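(* For $d\in D$ let $d'=d+1/(2N)$ if $d<1/2$, $d'=d$ if $d=1/2$, $d'=d-1/(2N)$ if $d>1/2$, and $f(d)=d'(1-d')$. Then $\sum_{d\in D}f(d)=\frac N6+\frac14-\frac1{6N}$. Moreover, if $T\ge \frac23N^3+N^2-\frac23N$, then for every mixed strategy $\tau$ of the rainmaker, the forecaster strategy $c_t=$ rounding of $p_t=\mathbb P_\tau[a_t=1\mid h_{t-1}]$ to the nearest point of $D$ (fixed tie-breaking) satisfies $\mathbb E[K_T]\le 1/N$.
   Context: Forecasting game: fix a positive integer $N$, the grid $D=\{1/(2N),3/(2N),\dots,(2N-1)/(2N)\}\subset[0,1]$ (which has $N$ points), and a horizon $T$. In each period $t=1,\dots,T$ the rainmaker chooses the weather $a_t\in\{0,1\}$ (1 = rain) and the forecaster chooses a forecast $c_t\in D$; both players have perfect recall, i.e. each may condition its period-$t$ choice on the full history $h_{t-1}=(a_1,c_1,\dots,a_{t-1},c_{t-1})\in(\{0,1\}\times D)^{t-1}$. A pure strategy of a player is a map from histories to its choice set; a mixed strategy is a probability distribution over its (finitely many) pure strategies. For $d\in D$ let $n(d)=\sum_{t=1}^T \mathbf 1_{c_t=d}$ and, when $n(d)>0$, $\bar a(d)=\frac{1}{n(d)}\sum_{t=1}^T\mathbf 1_{c_t=d}\,a_t$. The calibration score is $K_T=\sum_{d\in D}\frac{n(d)}{T}\,|\bar a(d)-d|$ (terms with $n(d)=0$ are $0$); equivalently $K_T=\frac1T\sum_{d\in D}\big|\sum_{t=1}^T\mathbf 1_{c_t=d}(a_t-d)\big|$.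 Expectations are over the random choices of both players. *)

theory Defs
  imports "HOL-Probability.Probability"
begin

definition grid :: "nat \<Rightarrow> real set" where
  "grid N = {(2 * real k + 1) / (2 * real N) | k. k < N}"

definition shiftd :: "nat \<Rightarrow> real \<Rightarrow> real" where
  "shiftd N d = (if d < 1/2 then d + 1 / (2 * real N)
                 else if d = 1/2 then d else d - 1 / (2 * real N))"

definition fd :: "nat \<Rightarrow> real \<Rightarrow> real" where
  "fd N d = shiftd N d * (1 - shiftd N d)"

text \<open>Histories: lists of (weather, forecast); weather True = rain (a_t = 1).\<close>
type_synonym history = "(bool \<times> real) list"

definition consistent :: "(history \<Rightarrow> bool) \<Rightarrow> history \<Rightarrow> bool" where
  "consistent \<sigma> h \<longleftrightarrow> (\<forall>i<length h. fst (h ! i) = \<sigma> (take i h))"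

text \<open>p_t = P_tau[a_t = 1 | h_{t-1}] (forecaster deterministic; value 0 on
  null histories, which is irrelevant).\<close>
definition rain_prob :: "(history \<Rightarrow> bool) pmf \<Rightarrow> history \<Rightarrow> real" where
  "rain_prob \<tau> h =
     measure_pmf.prob \<tau> {\<sigma>. consistent \<sigma> h \<and> \<sigma> h} / measure_pmf.prob \<tau> {\<sigma>. consistent \<sigma> h}"

fun play :: "(history \<Rightarrow> bool) \<Rightarrow> (history \<Rightarrow> real) \<Rightarrow> nat \<Rightarrow> history" where
  "play \<sigma> \<phi> 0 = []"
| "play \<sigma> \<phi> (Suc t) = play \<sigma> \<phi> t @ [(\<sigma> (play \<sigma> \<phi> t), \<phi> (play \<sigma> \<phi> t))]"

definition calib :: "nat \<Rightarrow> nat \<Rightarrow> history \<Rightarrow> real" where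
  "calib N T h = (1 / real T) *
     (\<Sum>d\<in>grid N. \<bar>\<Sum>t<T. if snd (h ! t) = d then of_bool (fst (h ! t)) - d else 0\<bar>)"

definition nearest_rounding :: "nat \<Rightarrow> (real \<Rightarrow> real) \<Rightarrow> bool" where
  "nearest_rounding N r \<longleftrightarrow> (\<forall>p. r p \<in> grid N \<and> (\<forall>d\<in>grid N. \<bar>p - r p\<bar> \<le> \<bar>p - d\<bar>))"

end

theory Submission
  imports Defs
begin


lemma integral_bind_pmf_bdd:
  fixes g :: "'b \<Rightarrow> real"
  assumes "\<And>x. \<bar>g x\<bar> \<le> B"
  shows "measure_pmf.expectation (bind_pmf p f) g =
         measure_pmf.expectation p (\<lambda>x. measure_pmf.expectation (f x) g)"
  unfolding measure_pmf_bind
proof (rule integral_bind[where K="count_space UNIV" and B=B and B'=1])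
  show "g \<in> borel_measurable (count_space UNIV)" by simp
  show "\<And>x. x \<in> space (count_space UNIV) \<Longrightarrow> \<bar>g x\<bar> \<le> B" using assms by simp
  show "(\<lambda>x. measure_pmf (f x)) \<in> measurable (measure_pmf p) (subprob_algebra (count_space UNIV))"
    using measurable_measure_pmf[of f] by (simp add: measurable_cong_sets)
  show "finite_measure (measure_pmf p)" by (simp add: measure_pmf.finite_measure_axioms)
  show "AE x in measure_pmf p. emeasure (measure_pmf (f x)) (space (measure_pmf (f x))) \<le> ennreal 1"
    by (simp add: measure_pmf.emeasure_space_1)
qed

lemma integrable_pmf_bdd:
  fixes g :: "'b \<Rightarrow> real"
  assumes "\<And>x. \<bar>g x\<bar> \<le> B"
  shows "integrable (measure_pmf p) g"
  by (rule measure_pmf.integrable_const_bound[where B=B]) (use assms in auto)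

lemma rain_prob_bounds: "0 \<le> rain_prob \<tau> h \<and> rain_prob \<tau> h \<le> 1"
  unfolding rain_prob_def
proof -
  let ?a = "measure_pmf.prob \<tau> {\<sigma>. consistent \<sigma> h \<and> \<sigma> h}"
  let ?b = "measure_pmf.prob \<tau> {\<sigma>. consistent \<sigma> h}"
  have "?a \<le> ?b" by (rule measure_pmf.finite_measure_mono) auto
  moreover have "0 \<le> ?a" by simp
  moreover have "0 \<le> ?b" by simp
  ultimately show "0 \<le> ?a / ?b \<and> ?a / ?b \<le> 1"
    by (cases "?b = 0") (auto simp: divide_le_eq_1 less_le)
qed

lemma play_len[simp]: "length (play \<sigma> \<phi> t) = t"
  by (induction t) auto

lemma play_take: "t \<le> T \<Longrightarrow> take t (play \<sigma> \<phi> T) = play \<sigma> \<phi> t"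
proof (induction T)
  case 0 then show ?case by simp
next
  case (Suc T)
  show ?case
  proof (cases "t = Suc T")
    case True then show ?thesis by simp
  next
    case False
    then have "t \<le> T" using Suc by simp
    then show ?thesis using Suc by simp
  qed
qed

lemma play_nth: "t < T \<Longrightarrow> play \<sigma> \<phi> T ! t = (\<sigma> (play \<sigma> \<phi> t), \<phi> (play \<sigma> \<phi> t))"
proof -
  assume "t < T"
  have "play \<sigma> \<phi> T ! t = take (Suc t) (play \<sigma> \<phi> T) ! t" using \<open>t<T\<close> by simp
  also have "\<dots> = play \<sigma> \<phi> (Suc t) ! t" using \<open>t<T\<close> by (simp add: play_take)
  also have "\<dots> = (\<sigma> (play \<sigma> \<phi> t), \<phi> (play \<sigma> \<phi> t))" by (simp add: nth_append)
  finally show ?thesis .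
qed

lemma consistent_play: "consistent \<sigma> (play \<sigma> \<phi> t)"
  unfolding consistent_def by (auto simp: play_nth play_take)

lemma consistent_iff: "consistent \<sigma>' (play \<sigma> \<phi> t) \<longleftrightarrow> play \<sigma>' \<phi> t = play \<sigma> \<phi> t"
proof
  assume "play \<sigma>' \<phi> t = play \<sigma> \<phi> t"
  then show "consistent \<sigma>' (play \<sigma> \<phi> t)" using consistent_play[of \<sigma>' \<phi> t] by simp
next
  show "consistent \<sigma>' (play \<sigma> \<phi> t) \<Longrightarrow> play \<sigma>' \<phi> t = play \<sigma> \<phi> t"
  proof (induction t)
    case 0 then show ?case by simp
  next
    case (Suc t)
    have c: "consistent \<sigma>' (play \<sigma> \<phi> t)"
      unfolding consistent_def
    proof (intro allI impI)
      fix i assume "i < length (play \<sigma> \<phi> t)"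
      then have "i < Suc t" "i < t" by auto
      then have "fst (play \<sigma> \<phi> (Suc t) ! i) = \<sigma>' (take i (play \<sigma> \<phi> (Suc t)))"
        using Suc.prems unfolding consistent_def by simp
      then show "fst (play \<sigma> \<phi> t ! i) = \<sigma>' (take i (play \<sigma> \<phi> t))"
        using \<open>i<t\<close> by (simp add: nth_append)
    qed
    have e: "play \<sigma>' \<phi> t = play \<sigma> \<phi> t" using Suc.IH c by simp
    have "fst (play \<sigma> \<phi> (Suc t) ! t) = \<sigma>' (take t (play \<sigma> \<phi> (Suc t)))"
      using Suc.prems unfolding consistent_def by simp
    then have "\<sigma> (play \<sigma> \<phi> t) = \<sigma>' (play \<sigma> \<phi> t)" by (simp add: nth_append)
    then show ?case using e by simp
  qed
qed



lemma key:
  fixes G :: "history \<Rightarrow> real"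
  assumes GB: "\<And>h. \<bar>G h\<bar> \<le> B"
  shows "measure_pmf.expectation \<tau>
     (\<lambda>\<sigma>. G (play \<sigma> \<phi> t) * (of_bool (\<sigma> (play \<sigma> \<phi> t)) - rain_prob \<tau> (play \<sigma> \<phi> t))) = 0"
proof -
  define Hs where "Hs = (\<lambda>\<sigma>. play \<sigma> \<phi> t)"
  define F where "F = (\<lambda>\<sigma>. G (Hs \<sigma>) * (of_bool (\<sigma> (Hs \<sigma>)) - rain_prob \<tau> (Hs \<sigma>)))"
  have canc: "bind_pmf \<tau> (\<lambda>x. cond_pmf \<tau> {y. Hs x = Hs y}) = \<tau>"
  proof (rule bind_cond_pmf_cancel)
    show "\<And>x. x \<in> set_pmf \<tau> \<Longrightarrow> set_pmf \<tau> \<inter> {y. Hs x = Hs y} \<noteq> {}" by blast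
    show "\<And>y. y \<in> set_pmf \<tau> \<Longrightarrow> set_pmf \<tau> \<inter> {x. Hs x = Hs y} \<noteq> {}" by blast
    show "\<And>x y. Hs x = Hs y \<Longrightarrow> measure_pmf.prob \<tau> {y. Hs x = Hs y} = measure_pmf.prob \<tau> {x. Hs x = Hs y}"
      by (rule arg_cong[where f="measure_pmf.prob \<tau>"]) auto
  qed
  have B0: "0 \<le> B" using GB[of "[]"] by simp
  have FB: "\<bar>F \<sigma>\<bar> \<le> B" for \<sigma>
  proof -
    have "\<bar>of_bool (\<sigma> (Hs \<sigma>)) - rain_prob \<tau> (Hs \<sigma>)\<bar> \<le> 1"
      using rain_prob_bounds[of \<tau> "Hs \<sigma>"] by auto
    then have "\<bar>F \<sigma>\<bar> \<le> B * 1" unfolding F_def abs_mult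
      by (intro mult_mono GB) (auto simp: B0)
    then show ?thesis by simp
  qed
  have inner: "measure_pmf.expectation (cond_pmf \<tau> {y. Hs x = Hs y}) F = 0" if x: "x \<in> set_pmf \<tau>" for x
  proof -
    define h where "h = Hs x"
    define A where "A = {y. h = Hs y}"
    have ne: "set_pmf \<tau> \<inter> A \<noteq> {}" using x unfolding A_def h_def by blast
    have A_eq: "A = {y. consistent y h}"
      unfolding A_def h_def Hs_def by (auto simp: consistent_iff)
    have "measure_pmf.expectation (cond_pmf \<tau> A) F =
          measure_pmf.expectation (cond_pmf \<tau> A) (\<lambda>y. G h * (indicator {y. y h} y - rain_prob \<tau> h))"
    proof (rule integral_cong_AE)
      show "AE y in cond_pmf \<tau> A. F y = G h * (indicator {y. y h} y - rain_prob \<tau> h)"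
        unfolding AE_measure_pmf_iff set_cond_pmf[OF ne]
      proof (intro ballI)
        fix y assume "y \<in> set_pmf \<tau> \<inter> A"
        then have "Hs y = h" by (simp add: A_def)
        then show "F y = G h * (indicator {y. y h} y - rain_prob \<tau> h)"
          by (simp add: F_def indicator_def)
      qed
    qed simp_all
    also have "\<dots> = G h * (measure_pmf.expectation (cond_pmf \<tau> A) (indicator {y. y h}) - rain_prob \<tau> h)"
    proof -
      have i1: "integrable (measure_pmf (cond_pmf \<tau> A)) (\<lambda>y. G h * indicator {y. y h} y)"
        by (rule integrable_pmf_bdd[where B="\<bar>G h\<bar>"]) (auto simp: indicator_def abs_mult)
      have "measure_pmf.expectation (cond_pmf \<tau> A) (\<lambda>y. G h * (indicator {y. y h} y - rain_prob \<tau> h))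
          = measure_pmf.expectation (cond_pmf \<tau> A) (\<lambda>y. G h * indicator {y. y h} y - G h * rain_prob \<tau> h)"
        by (simp add: right_diff_distrib)
      also have "\<dots> = measure_pmf.expectation (cond_pmf \<tau> A) (\<lambda>y. G h * indicator {y. y h} y) - G h * rain_prob \<tau> h"
        by (subst Bochner_Integration.integral_diff[OF i1]) (auto simp: measure_pmf.prob_space)
      finally show ?thesis by (simp add: right_diff_distrib)
    qed
    also have "measure_pmf.expectation (cond_pmf \<tau> A) (indicator {y. y h}) = measure_pmf.prob (cond_pmf \<tau> A) {y. y h}"
      by simp
    also have "\<dots> = measure_pmf.prob \<tau> (A \<inter> {y. y h}) / measure_pmf.prob \<tau> A"
      unfolding cond_pmf.rep_eq[OF ne]
      by (rule measure_uniform_measure) (simp_all add: emeasure_measure_pmf_not_zero[OF ne])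
    also have "\<dots> = rain_prob \<tau> h"
      unfolding rain_prob_def A_eq by (simp add: Collect_conj_eq)
    finally show ?thesis unfolding A_def h_def by simp
  qed
  have "measure_pmf.expectation \<tau> F = measure_pmf.expectation (bind_pmf \<tau> (\<lambda>x. cond_pmf \<tau> {y. Hs x = Hs y})) F"
    by (simp add: canc)
  also have "\<dots> = measure_pmf.expectation \<tau> (\<lambda>x. measure_pmf.expectation (cond_pmf \<tau> {y. Hs x = Hs y}) F)"
    by (rule integral_bind_pmf_bdd[OF FB])
  also have "\<dots> = measure_pmf.expectation \<tau> (\<lambda>x. 0)"
    by (rule integral_cong_AE) (auto simp: AE_measure_pmf_iff inner)
  finally show ?thesis unfolding F_def Hs_def by simp
qed



lemma sum_quad: "(\<Sum>i<n. (a + real i) * (b - real i)) =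
   real n * a * b + (b - a) * real n * (real n - 1) / 2 - (real n - 1) * real n * (2 * real n - 1) / 6"
  by (induction n) (simp_all add: field_simps power2_eq_square)

lemma grid_eq: "grid N = (\<lambda>k. (2 * real k + 1) / (2 * real N)) ` {..<N}"
  unfolding grid_def by auto

lemma grid_inj: "N > 0 \<Longrightarrow> inj_on (\<lambda>k. (2 * real k + 1) / (2 * real N)) {..<N}"
  by (auto simp: inj_on_def)

lemma finite_grid: "finite (grid N)"
  unfolding grid_eq by simp

lemma fd_lo: "N > 0 \<Longrightarrow> 2 * k + 1 < N \<Longrightarrow>
   fd N ((2 * real k + 1) / (2 * real N)) = (1 / real N)^2 * ((1 + real k) * (real N - real k - 1))"
proof -
  assume N: "N > 0" and k: "2 * k + 1 < N"
  have "(2 * real k + 1) / (2 * real N) < 1/2" using N k by (simp add: field_simps)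
  then have sh: "shiftd N ((2 * real k + 1) / (2 * real N)) = (real k + 1) / real N"
    unfolding shiftd_def using N by (simp add: field_simps)
  show ?thesis unfolding fd_def sh using N by (simp add: field_simps power2_eq_square)
qed

lemma fd_hi: "N > 0 \<Longrightarrow> N < 2 * k + 1 \<Longrightarrow>
   fd N ((2 * real k + 1) / (2 * real N)) = (1 / real N)^2 * (real k * (real N - real k))"
proof -
  assume N: "N > 0" and k: "N < 2 * k + 1"
  have "\<not> (2 * real k + 1) / (2 * real N) < 1/2" "(2 * real k + 1) / (2 * real N) \<noteq> 1/2"
    using N k by (simp_all add: field_simps)
  then have sh: "shiftd N ((2 * real k + 1) / (2 * real N)) = real k / real N"
    unfolding shiftd_def using N by (simp add: field_simps)
  show ?thesis unfolding fd_def sh using N by (simp add: field_simps power2_eq_square)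
qed

lemma fd_mid: "N > 0 \<Longrightarrow> N = 2 * k + 1 \<Longrightarrow> fd N ((2 * real k + 1) / (2 * real N)) = 1/4"
proof -
  assume N: "N > 0" and k: "N = 2 * k + 1"
  have h: "(2 * real k + 1) / (2 * real N) = 1/2" using N k by (simp add: field_simps)
  show ?thesis unfolding fd_def shiftd_def h by simp
qed

lemma part1:
  assumes N: "N > 0"
  shows "(\<Sum>d\<in>grid N. fd N d) = real N / 6 + 1 / 4 - 1 / (6 * real N)"
proof -
  let ?g = "\<lambda>k. (2 * real k + 1) / (2 * real N)"
  have s: "(\<Sum>d\<in>grid N. fd N d) = (\<Sum>k<N. fd N (?g k))"
    unfolding grid_eq by (rule sum.reindex_cong[OF grid_inj[OF N] refl]) simp
  obtain m where m: "N = 2 * m \<or> N = 2 * m + 1" by (metis dvd_mult_div_cancel odd_two_times_div_two_succ even_iff_mod_2_eq_zero)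
  then show ?thesis
  proof
    assume Nm: "N = 2 * m"
    have U: "{..<N} = {..<m} \<union> {m..<m+m}" using Nm by auto
    have "(\<Sum>k<N. fd N (?g k)) = (\<Sum>k<m. fd N (?g k)) + (\<Sum>k\<in>{m..<m+m}. fd N (?g k))"
      unfolding U by (subst sum.union_disjoint) auto
    also have "(\<Sum>k\<in>{m..<m+m}. fd N (?g k)) = (\<Sum>i<m. fd N (?g (m + i)))"
      by (subst sum.atLeastLessThan_shift_0) (simp add: lessThan_atLeast0 comp_def)
    also have "\<dots> = (\<Sum>i<m. (1 / real N)^2 * ((real m + real i) * (real N - real i - real m)))"
    proof (rule sum.cong[OF refl])
      fix i assume "i \<in> {..<m}"
      then have "N < 2 * (m + i) + 1" using Nm by auto
      from fd_hi[OF N this] show "fd N (?g (m + i)) = (1 / real N)^2 * ((real m + real i) * (real N - real i - real m))"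
        by (simp add: algebra_simps)
    qed
    also have "(\<Sum>k<m. fd N (?g k)) = (\<Sum>i<m. (1 / real N)^2 * ((1 + real i) * (real N - 1 - real i)))"
    proof (rule sum.cong[OF refl])
      fix i assume "i \<in> {..<m}"
      then have "2 * i + 1 < N" using Nm by auto
      from fd_lo[OF N this] show "fd N (?g i) = (1 / real N)^2 * ((1 + real i) * (real N - 1 - real i))"
        by (simp add: algebra_simps)
    qed
    finally have "(\<Sum>k<N. fd N (?g k)) = (1 / real N)^2 * ((\<Sum>i<m. (1 + real i) * (real N - 1 - real i))
        + (\<Sum>i<m. (real m + real i) * (real N - real m - real i)))"
      by (simp add: sum_distrib_left algebra_simps)
    also have "\<dots> = real N / 6 + 1 / 4 - 1 / (6 * real N)"
      unfolding sum_quad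
      using N Nm by (simp add: field_simps power2_eq_square)
    finally show ?thesis using s by simp
  next
    assume Nm: "N = 2 * m + 1"
    have U: "{..<N} = {..<m} \<union> {m} \<union> {Suc m..<Suc m+m}" using Nm by auto
    have "(\<Sum>k<N. fd N (?g k)) = (\<Sum>k<m. fd N (?g k)) + fd N (?g m) + (\<Sum>k\<in>{Suc m..<Suc m+m}. fd N (?g k))"
      unfolding U by (subst sum.union_disjoint) auto
    also have "(\<Sum>k\<in>{Suc m..<Suc m+m}. fd N (?g k)) = (\<Sum>i<m. fd N (?g (Suc m + i)))"
      by (subst sum.atLeastLessThan_shift_0) (simp add: lessThan_atLeast0 comp_def)
    also have "\<dots> = (\<Sum>i<m. (1 / real N)^2 * ((real m + 1 + real i) * (real N - real i - (real m + 1))))"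
    proof (rule sum.cong[OF refl])
      fix i assume "i \<in> {..<m}"
      then have "N < 2 * (Suc m + i) + 1" using Nm by auto
      from fd_hi[OF N this] show "fd N (?g (Suc m + i)) = (1 / real N)^2 * ((real m + 1 + real i) * (real N - real i - (real m + 1)))"
        by (simp add: algebra_simps)
    qed
    also have "(\<Sum>k<m. fd N (?g k)) = (\<Sum>i<m. (1 / real N)^2 * ((1 + real i) * (real N - 1 - real i)))"
    proof (rule sum.cong[OF refl])
      fix i assume "i \<in> {..<m}"
      then have "2 * i + 1 < N" using Nm by auto
      from fd_lo[OF N this] show "fd N (?g i) = (1 / real N)^2 * ((1 + real i) * (real N - 1 - real i))"
        by (simp add: algebra_simps)
    qed
    also have "fd N (?g m) = 1/4" using fd_mid[OF N Nm] .
    finally have "(\<Sum>k<N. fd N (?g k)) = (1 / real N)^2 * ((\<Sum>i<m. (1 + real i) * (real N - 1 - real i))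
        + (\<Sum>i<m. (real m + 1 + real i) * (real N - (real m + 1) - real i))) + 1/4"
      by (simp add: sum_distrib_left algebra_simps)
    also have "\<dots> = real N / 6 + 1 / 4 - 1 / (6 * real N)"
    proof -
      have rN: "real N = 2 * real m + 1" using Nm by simp
      have nz: "2 * real m + 1 \<noteq> 0" by linarith
      have pos: "0 < 144 + (real m * 576 + real m * (real m * 576))" by (simp add: add_pos_nonneg)
      show ?thesis unfolding sum_quad rN using nz
        by (simp add: field_simps power2_eq_square) (use pos in \<open>simp add: divide_eq_eq algebra_simps\<close>)
    qed
    finally show ?thesis using s by simp
  qed
qed



definition Mh :: "(history \<Rightarrow> bool) pmf \<Rightarrow> real \<Rightarrow> history \<Rightarrow> real" where
  "Mh \<tau> d h = (\<Sum>s<length h. if snd (h!s) = d then of_bool (fst (h!s)) - rain_prob \<tau> (take s h) else 0)"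

lemma Mh_snoc: "Mh \<tau> d (h @ [x]) = Mh \<tau> d h + (if snd x = d then of_bool (fst x) - rain_prob \<tau> h else 0)"
  unfolding Mh_def by (auto intro!: sum.cong simp: nth_append take_append)

lemma Mh_bound: "\<bar>Mh \<tau> d h\<bar> \<le> real (length h)"
proof -
  have "\<bar>Mh \<tau> d h\<bar> \<le> (\<Sum>s<length h. \<bar>if snd (h!s) = d then of_bool (fst (h!s)) - rain_prob \<tau> (take s h) else 0\<bar>)"
    unfolding Mh_def by (rule sum_abs)
  also have "\<dots> \<le> (\<Sum>s<length h. 1)"
  proof (rule sum_mono)
    fix s
    show "\<bar>if snd (h!s) = d then of_bool (fst (h!s)) - rain_prob \<tau> (take s h) else 0\<bar> \<le> 1"
      using rain_prob_bounds[of \<tau> "take s h"] by auto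
  qed
  finally show ?thesis by simp
qed

lemma ap_sq: "a \<in> {0, 1::real} \<Longrightarrow> (a - p)^2 = (1 - 2 * p) * (a - p) + p * (1 - p)"
  by (auto simp: power2_eq_square algebra_simps)

lemma second_moment:
  fixes \<tau> :: "(history \<Rightarrow> bool) pmf" and \<phi> :: "history \<Rightarrow> real" and d :: real
  shows "measure_pmf.expectation \<tau> (\<lambda>\<sigma>. (Mh \<tau> d (play \<sigma> \<phi> t))^2) =
         measure_pmf.expectation \<tau> (\<lambda>\<sigma>. \<Sum>s<t. if \<phi> (play \<sigma> \<phi> s) = d
            then rain_prob \<tau> (play \<sigma> \<phi> s) * (1 - rain_prob \<tau> (play \<sigma> \<phi> s)) else 0)"
proof (induction t)
  case 0 then show ?case by (simp add: Mh_def)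
next
  case (Suc t)
  define H where "H = (\<lambda>\<sigma>. play \<sigma> \<phi> t)"
  define M where "M = (\<lambda>\<sigma>. Mh \<tau> d (H \<sigma>))"
  define p where "p = (\<lambda>\<sigma>. rain_prob \<tau> (H \<sigma>))"
  define a where "a = (\<lambda>\<sigma>. of_bool (\<sigma> (H \<sigma>)) :: real)"
  define G where "G = (\<lambda>h. if length h = t \<and> \<phi> h = d then 2 * Mh \<tau> d h + 1 - 2 * rain_prob \<tau> h else 0)"
  define Y where "Y = (\<lambda>\<sigma>. if \<phi> (H \<sigma>) = d then p \<sigma> * (1 - p \<sigma>) else 0)"
  define S where "S = (\<lambda>\<sigma>. \<Sum>s<t. if \<phi> (play \<sigma> \<phi> s) = d
            then rain_prob \<tau> (play \<sigma> \<phi> s) * (1 - rain_prob \<tau> (play \<sigma> \<phi> s)) else 0)"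
  have pb: "0 \<le> p \<sigma> \<and> p \<sigma> \<le> 1" for \<sigma> unfolding p_def by (rule rain_prob_bounds)
  have Mb: "\<bar>M \<sigma>\<bar> \<le> real t" for \<sigma> unfolding M_def H_def using Mh_bound[of \<tau> d "play \<sigma> \<phi> t"] by simp
  have GB: "\<bar>G h\<bar> \<le> 2 * real t + 3" for h
  proof -
    have "\<bar>Mh \<tau> d h\<bar> \<le> real (length h)" by (rule Mh_bound)
    moreover have "0 \<le> rain_prob \<tau> h \<and> rain_prob \<tau> h \<le> 1" by (rule rain_prob_bounds)
    ultimately show ?thesis unfolding G_def by auto
  qed
  have Z0: "measure_pmf.expectation \<tau> (\<lambda>\<sigma>. G (H \<sigma>) * (a \<sigma> - p \<sigma>)) = 0"
    unfolding H_def a_def p_def by (rule key[OF GB])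
  have pw: "(Mh \<tau> d (play \<sigma> \<phi> (Suc t)))^2 = (M \<sigma>)^2 + G (H \<sigma>) * (a \<sigma> - p \<sigma>) + Y \<sigma>" for \<sigma>
  proof -
    have e: "Mh \<tau> d (play \<sigma> \<phi> (Suc t)) = M \<sigma> + (if \<phi> (H \<sigma>) = d then a \<sigma> - p \<sigma> else 0)"
      by (simp add: Mh_snoc M_def H_def a_def p_def)
    have a01: "a \<sigma> \<in> {0, 1}" unfolding a_def by simp
    show ?thesis
    proof (cases "\<phi> (H \<sigma>) = d")
      case True
      have "(M \<sigma> + (a \<sigma> - p \<sigma>))^2 = (M \<sigma>)^2 + 2 * M \<sigma> * (a \<sigma> - p \<sigma>) + (a \<sigma> - p \<sigma>)^2"
        by (simp add: power2_eq_square algebra_simps)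
      also have "\<dots> = (M \<sigma>)^2 + (2 * M \<sigma> + 1 - 2 * p \<sigma>) * (a \<sigma> - p \<sigma>) + p \<sigma> * (1 - p \<sigma>)"
        unfolding ap_sq[OF a01] by (simp add: algebra_simps)
      finally show ?thesis using True unfolding e G_def Y_def M_def H_def p_def by simp
    next
      case False
      then show ?thesis unfolding e G_def Y_def H_def by simp
    qed
  qed
  have i1: "integrable (measure_pmf \<tau>) (\<lambda>\<sigma>. (M \<sigma>)^2)"
  proof (rule integrable_pmf_bdd[where B="real t ^ 2"])
    fix \<sigma> show "\<bar>(M \<sigma>)^2\<bar> \<le> real t ^ 2"
      using power_mono[OF Mb[of \<sigma>] abs_ge_zero, of 2] by simp
  qed
  have i2: "integrable (measure_pmf \<tau>) (\<lambda>\<sigma>. G (H \<sigma>) * (a \<sigma> - p \<sigma>))"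
  proof (rule integrable_pmf_bdd[where B="2 * real t + 3"])
    fix \<sigma>
    have "\<bar>a \<sigma> - p \<sigma>\<bar> \<le> 1" using pb[of \<sigma>] unfolding a_def by auto
    then have "\<bar>G (H \<sigma>)\<bar> * \<bar>a \<sigma> - p \<sigma>\<bar> \<le> (2 * real t + 3) * 1"
      by (intro mult_mono GB) auto
    then show "\<bar>G (H \<sigma>) * (a \<sigma> - p \<sigma>)\<bar> \<le> 2 * real t + 3" by (simp add: abs_mult)
  qed
  have i3: "integrable (measure_pmf \<tau>) Y"
  proof (rule integrable_pmf_bdd[where B=1])
    fix \<sigma> show "\<bar>Y \<sigma>\<bar> \<le> 1" using pb[of \<sigma>] unfolding Y_def
      by (auto simp: abs_mult intro: mult_le_one)
  qed
  have i4: "integrable (measure_pmf \<tau>) S"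
  proof (rule integrable_pmf_bdd[where B="real t"])
    fix \<sigma>
    have "\<bar>S \<sigma>\<bar> \<le> (\<Sum>s<t. 1)" unfolding S_def
    proof (rule order.trans[OF sum_abs sum_mono])
      fix s
      show "\<bar>if \<phi> (play \<sigma> \<phi> s) = d then rain_prob \<tau> (play \<sigma> \<phi> s) * (1 - rain_prob \<tau> (play \<sigma> \<phi> s)) else 0\<bar> \<le> 1"
        using rain_prob_bounds[of \<tau> "play \<sigma> \<phi> s"] by (auto simp: abs_mult intro: mult_le_one)
    qed
    then show "\<bar>S \<sigma>\<bar> \<le> real t" by simp
  qed
  have "measure_pmf.expectation \<tau> (\<lambda>\<sigma>. (Mh \<tau> d (play \<sigma> \<phi> (Suc t)))^2)
      = measure_pmf.expectation \<tau> (\<lambda>\<sigma>. (M \<sigma>)^2 + G (H \<sigma>) * (a \<sigma> - p \<sigma>) + Y \<sigma>)"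
    by (simp only: pw)
  also have "\<dots> = measure_pmf.expectation \<tau> (\<lambda>\<sigma>. (M \<sigma>)^2) + measure_pmf.expectation \<tau> (\<lambda>\<sigma>. G (H \<sigma>) * (a \<sigma> - p \<sigma>))
       + measure_pmf.expectation \<tau> Y"
    using i1 i2 i3 by simp
  also have "measure_pmf.expectation \<tau> (\<lambda>\<sigma>. (M \<sigma>)^2) = measure_pmf.expectation \<tau> S"
    using Suc.IH unfolding M_def H_def S_def by simp
  also have "measure_pmf.expectation \<tau> S + measure_pmf.expectation \<tau> (\<lambda>\<sigma>. G (H \<sigma>) * (a \<sigma> - p \<sigma>))
       + measure_pmf.expectation \<tau> Y = measure_pmf.expectation \<tau> (\<lambda>\<sigma>. S \<sigma> + Y \<sigma>)"
    using i3 i4 Z0 by simp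
  also have "(\<lambda>\<sigma>. S \<sigma> + Y \<sigma>) = (\<lambda>\<sigma>. \<Sum>s<Suc t. if \<phi> (play \<sigma> \<phi> s) = d
            then rain_prob \<tau> (play \<sigma> \<phi> s) * (1 - rain_prob \<tau> (play \<sigma> \<phi> s)) else 0)"
    unfolding S_def Y_def p_def H_def by simp
  finally show ?case .
qed



lemma near_bound:
  assumes N: "N > 0" and nr: "nearest_rounding N r" and p: "0 \<le> p" "p \<le> 1"
  shows "\<bar>p - r p\<bar> \<le> 1 / (2 * real N)"
proof -
  obtain k where k: "k < N" "real k \<le> p * N" "p * N \<le> real k + 1"
  proof (cases "nat \<lfloor>p * N\<rfloor> < N")
    case True
    have "0 \<le> \<lfloor>p * N\<rfloor>" using p by simp
    then have e: "real (nat \<lfloor>p * N\<rfloor>) = of_int \<lfloor>p * N\<rfloor>" by simp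
    show ?thesis
      by (rule that[OF True]) (use e in \<open>linarith\<close>)+
  next
    case False
    then have "real N \<le> real (nat \<lfloor>p * N\<rfloor>)" by simp
    also have "\<dots> \<le> p * N" using p by simp
    finally have "real N \<le> p * N" .
    show ?thesis
    proof (rule that[of "N - 1"])
      show "N - 1 < N" using N by simp
      have "real (N - 1) = real N - 1" using N by (simp add: of_nat_diff)
      then show "real (N - 1) \<le> p * real N" using \<open>real N \<le> p * N\<close> by linarith
      show "p * real N \<le> real (N - 1) + 1" using p N by (simp add: of_nat_diff mult_left_le_one_le)
    qed
  qed
  define d where "d = (2 * real k + 1) / (2 * real N)"
  have dg: "d \<in> grid N" unfolding grid_def d_def using k by auto
  have "\<bar>p - d\<bar> \<le> 1 / (2 * real N)"
  proof -
    have "\<bar>p - d\<bar> = \<bar>2 * (p * N) - 2 * real k - 1\<bar> / (2 * real N)"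
      unfolding d_def using N by (simp add: field_simps abs_div)
    also have "\<dots> \<le> 1 / (2 * real N)"
      using k N by (intro divide_right_mono) auto
    finally show ?thesis .
  qed
  moreover have "\<bar>p - r p\<bar> \<le> \<bar>p - d\<bar>" using nr dg unfolding nearest_rounding_def by blast
  ultimately show ?thesis by linarith
qed

lemma round_in_grid: "nearest_rounding N r \<Longrightarrow> r p \<in> grid N"
  unfolding nearest_rounding_def by blast

lemma fd_bound:
  assumes N: "N > 0" and dg: "d \<in> grid N" and pd: "\<bar>p - d\<bar> \<le> 1 / (2 * real N)"
  shows "p * (1 - p) \<le> fd N d"
proof -
  obtain k where k: "k < N" and dk: "d = (2 * real k + 1) / (2 * real N)" using dg unfolding grid_def by auto
  consider "2 * k + 1 < N" | "2 * k + 1 = N" | "N < 2 * k + 1" by linarith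
  then show ?thesis
  proof cases
    case 1
    have sh: "shiftd N d = d + 1 / (2 * real N)"
      "d < 1/2" using N 1 unfolding shiftd_def dk by (simp_all add: field_simps)
    have "2 * real k + 2 \<le> real N" using 1 by linarith
    then have "d + 1 / (2 * real N) \<le> 1/2" unfolding dk using N by (simp add: field_simps)
    moreover have "p \<le> d + 1 / (2 * real N)" using pd by linarith
    ultimately have "0 \<le> (d + 1 / (2 * real N) - p) * (1 - (d + 1 / (2 * real N)) - p)"
      by (intro mult_nonneg_nonneg) linarith+
    then show ?thesis unfolding fd_def sh by (simp add: algebra_simps)
  next
    case 2
    have h: "d = 1/2" unfolding dk using N 2 by (simp add: field_simps)
    have "fd N d = 1/4" unfolding fd_def shiftd_def h by simp
    moreover have "0 \<le> (p - 1/2)^2" by simp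
    ultimately show ?thesis by (simp add: power2_eq_square algebra_simps)
  next
    case 3
    have d12: "\<not> d < 1/2" "d \<noteq> 1/2" using N 3 unfolding dk by (simp_all add: field_simps)
    have sh: "shiftd N d = d - 1 / (2 * real N)" unfolding shiftd_def using d12 by simp
    have "real N \<le> 2 * real k" using 3 by linarith
    then have "1/2 \<le> d - 1 / (2 * real N)" unfolding dk using N by (simp add: field_simps)
    moreover have "d - 1 / (2 * real N) \<le> p" using pd by linarith
    ultimately have "0 \<le> (p - (d - 1 / (2 * real N))) * (p + (d - 1 / (2 * real N)) - 1)"
      by (intro mult_nonneg_nonneg) linarith+
    moreover have eq: "(p - q) * (p + q - 1) = q * (1 - q) - p * (1 - p)" for q :: real
      by (simp add: algebra_simps)
    ultimately show ?thesis unfolding fd_def sh using eq[of "d - 1 / (2 * real N)"] by linarith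
  qed
qed

lemma fd_nonneg:
  assumes N: "N > 0" and dg: "d \<in> grid N"
  shows "0 \<le> fd N d"
proof -
  obtain k where k: "k < N" and dk: "d = (2 * real k + 1) / (2 * real N)" using dg unfolding grid_def by auto
  have "0 \<le> d" "d \<le> 1" unfolding dk using N k by (simp_all add: field_simps)
  then have "0 \<le> d * (1 - d)" by simp
  also have "\<dots> \<le> fd N d" by (rule fd_bound[OF N dg]) (use N in simp)
  finally show ?thesis .
qed

lemma sum_ind_le: "finite A \<Longrightarrow> (\<Sum>d\<in>A. of_bool (c = d) :: real) \<le> 1"
proof -
  assume "finite A"
  then have "(\<Sum>d\<in>A. of_bool (c = d) :: real) = (if c \<in> A then 1 else 0)"
    by (simp add: of_bool_def sum.delta)
  then show ?thesis by simp
qed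

lemma abs_moment:
  fixes X :: "'a \<Rightarrow> real"
  assumes XB: "\<And>x. \<bar>X x\<bar> \<le> B"
  shows "(measure_pmf.expectation p (\<lambda>x. \<bar>X x\<bar>))^2 \<le> measure_pmf.expectation p (\<lambda>x. (X x)^2)"
proof -
  have i1: "integrable (measure_pmf p) (\<lambda>x. \<bar>X x\<bar>)"
    by (rule integrable_pmf_bdd[where B=B]) (use XB in simp)
  have i2: "integrable (measure_pmf p) (\<lambda>x. (\<bar>X x\<bar>)^2)"
  proof (rule integrable_pmf_bdd[where B="B^2"])
    fix x show "\<bar>(\<bar>X x\<bar>)^2\<bar> \<le> B^2" using power_mono[OF XB[of x] abs_ge_zero, of 2] by simp
  qed
  have "measure_pmf.variance p (\<lambda>x. \<bar>X x\<bar>) =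
     measure_pmf.expectation p (\<lambda>x. (\<bar>X x\<bar>)^2) - (measure_pmf.expectation p (\<lambda>x. \<bar>X x\<bar>))^2"
    by (rule measure_pmf.variance_eq[OF i1 i2])
  moreover have "0 \<le> measure_pmf.variance p (\<lambda>x. \<bar>X x\<bar>)" by (rule measure_pmf.variance_positive)
  ultimately show ?thesis by simp
qed



lemma main2:
  fixes N T :: nat and \<tau> :: "(history \<Rightarrow> bool) pmf" and r :: "real \<Rightarrow> real"
  assumes N: "N > 0" and T: "T > 0"
    and hT: "4 * real N ^ 2 * (\<Sum>d\<in>grid N. fd N d) \<le> real T"
    and nr: "nearest_rounding N r"
    and phi: "\<phi> = (\<lambda>h. r (rain_prob \<tau> h))"
  shows "measure_pmf.expectation \<tau> (\<lambda>\<sigma>. calib N T (play \<sigma> \<phi> T)) \<le> 1 / real N"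
proof -
  define G where "G = grid N"
  define F where "F = (\<Sum>d\<in>G. fd N d)"
  define c where "c = (\<lambda>s \<sigma>. \<phi> (play \<sigma> \<phi> s))"
  define pp where "pp = (\<lambda>s \<sigma>. rain_prob \<tau> (play \<sigma> \<phi> s))"
  define aa where "aa = (\<lambda>s \<sigma>. of_bool (\<sigma> (play \<sigma> \<phi> s)) :: real)"
  define M where "M = (\<lambda>d \<sigma>. Mh \<tau> d (play \<sigma> \<phi> T))"
  define n where "n = (\<lambda>d \<sigma>. \<Sum>s<T. of_bool (c s \<sigma> = d) :: real)"
  define K where "K = (\<lambda>\<sigma>. calib N T (play \<sigma> \<phi> T))"
  have finG: "finite G" unfolding G_def by (rule finite_grid)
  have Tpos: "0 < real T" using T by simp
  have Npos: "0 < real N" using N by simp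
  have cg: "c s \<sigma> \<in> G" for s \<sigma> unfolding c_def G_def phi using round_in_grid[OF nr] by simp
  have near: "\<bar>pp s \<sigma> - c s \<sigma>\<bar> \<le> 1 / (2 * real N)" for s \<sigma>
    unfolding pp_def c_def phi using near_bound[OF N nr] rain_prob_bounds by blast
  have ppb: "0 \<le> pp s \<sigma> \<and> pp s \<sigma> \<le> 1" for s \<sigma> unfolding pp_def by (rule rain_prob_bounds)
  have Mexp: "M d \<sigma> = (\<Sum>s<T. if c s \<sigma> = d then aa s \<sigma> - pp s \<sigma> else 0)" for d \<sigma>
    unfolding M_def Mh_def by (auto intro!: sum.cong simp: play_nth play_take c_def aa_def pp_def)
  have Kexp: "K \<sigma> = (1 / real T) * (\<Sum>d\<in>G. \<bar>\<Sum>s<T. if c s \<sigma> = d then aa s \<sigma> - d else 0\<bar>)" for \<sigma>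
    unfolding K_def calib_def G_def by (auto intro!: sum.cong arg_cong[where f=abs] simp: play_nth c_def aa_def)
  have Mb: "\<bar>M d \<sigma>\<bar> \<le> real T" for d \<sigma> unfolding M_def using Mh_bound[of \<tau> d "play \<sigma> \<phi> T"] by simp
  have nb: "0 \<le> n d \<sigma> \<and> n d \<sigma> \<le> real T" for d \<sigma>
  proof -
    have "n d \<sigma> \<le> (\<Sum>s<T. 1)" unfolding n_def by (rule sum_mono) simp
    then show ?thesis unfolding n_def by (simp add: sum_nonneg)
  qed
  have nsum: "(\<Sum>d\<in>G. n d \<sigma>) \<le> real T" for \<sigma>
  proof -
    have "(\<Sum>d\<in>G. n d \<sigma>) = (\<Sum>s<T. \<Sum>d\<in>G. of_bool (c s \<sigma> = d))" unfolding n_def by (rule sum.swap)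
    also have "\<dots> \<le> (\<Sum>s<T. 1)" by (rule sum_mono) (rule sum_ind_le[OF finG])
    finally show ?thesis by simp
  qed
  have perd: "\<bar>\<Sum>s<T. if c s \<sigma> = d then aa s \<sigma> - d else 0\<bar> \<le> \<bar>M d \<sigma>\<bar> + n d \<sigma> / (2 * real N)" for d \<sigma>
  proof -
    have "(\<Sum>s<T. if c s \<sigma> = d then aa s \<sigma> - d else 0) = M d \<sigma> + (\<Sum>s<T. if c s \<sigma> = d then pp s \<sigma> - d else 0)"
      unfolding Mexp sum.distrib[symmetric] by (rule sum.cong) auto
    moreover have "\<bar>\<Sum>s<T. if c s \<sigma> = d then pp s \<sigma> - d else 0\<bar> \<le> n d \<sigma> / (2 * real N)"
    proof -
      have "\<bar>\<Sum>s<T. if c s \<sigma> = d then pp s \<sigma> - d else 0\<bar> \<le> (\<Sum>s<T. \<bar>if c s \<sigma> = d then pp s \<sigma> - d else 0\<bar>)"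
        by (rule sum_abs)
      also have "\<dots> \<le> (\<Sum>s<T. of_bool (c s \<sigma> = d) * (1 / (2 * real N)))"
        by (rule sum_mono) (use near in auto)
      also have "\<dots> = n d \<sigma> / (2 * real N)" unfolding n_def sum_divide_distrib by (rule sum.cong) auto
      finally show ?thesis .
    qed
    ultimately show ?thesis by linarith
  qed
  have A: "K \<sigma> \<le> (1 / real T) * (\<Sum>d\<in>G. \<bar>M d \<sigma>\<bar>) + 1 / (2 * real N)" for \<sigma>
  proof -
    have "K \<sigma> \<le> (1 / real T) * (\<Sum>d\<in>G. \<bar>M d \<sigma>\<bar> + n d \<sigma> / (2 * real N))"
      unfolding Kexp using Tpos by (intro mult_left_mono sum_mono perd) auto
    also have "\<dots> = (1 / real T) * (\<Sum>d\<in>G. \<bar>M d \<sigma>\<bar>) + (1 / real T) * ((\<Sum>d\<in>G. n d \<sigma>) / (2 * real N))"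
      by (simp add: sum.distrib sum_divide_distrib distrib_left)
    also have "(1 / real T) * ((\<Sum>d\<in>G. n d \<sigma>) / (2 * real N)) \<le> (1 / real T) * (real T / (2 * real N))"
      using Tpos Npos nsum[of \<sigma>] by (intro mult_left_mono divide_right_mono) auto
    also have "(1 / real T) * (real T / (2 * real N)) = 1 / (2 * real N)" using Tpos by simp
    finally show ?thesis by simp
  qed
  have K0: "0 \<le> K \<sigma>" for \<sigma> unfolding Kexp using Tpos by (simp add: sum_nonneg)
  have sumMb: "(\<Sum>d\<in>G. \<bar>M d \<sigma>\<bar>) \<le> real (card G) * real T" for \<sigma>
    using sum_bounded_above[of G "\<lambda>d. \<bar>M d \<sigma>\<bar>" "real T"] Mb by simp
  have RHSb: "\<bar>(1 / real T) * (\<Sum>d\<in>G. \<bar>M d \<sigma>\<bar>) + 1 / (2 * real N)\<bar> \<le> real (card G) + 1" for \<sigma>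
  proof -
    have "(1 / real T) * (\<Sum>d\<in>G. \<bar>M d \<sigma>\<bar>) \<le> (1 / real T) * (real (card G) * real T)"
      using Tpos sumMb[of \<sigma>] by (intro mult_left_mono) auto
    also have "\<dots> = real (card G)" using Tpos by simp
    finally have "(1 / real T) * (\<Sum>d\<in>G. \<bar>M d \<sigma>\<bar>) \<le> real (card G)" .
    moreover have "1 / (2 * real N) \<le> 1" using Npos by simp
    moreover have "0 \<le> (1 / real T) * (\<Sum>d\<in>G. \<bar>M d \<sigma>\<bar>)" using Tpos by (simp add: sum_nonneg)
    moreover have "0 \<le> 1 / (2 * real N)" using Npos by simp
    ultimately show ?thesis by linarith
  qed
  have Kb: "\<bar>K \<sigma>\<bar> \<le> real (card G) + 1" for \<sigma>
    using A[of \<sigma>] K0[of \<sigma>] RHSb[of \<sigma>] by linarith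
  have iK: "integrable (measure_pmf \<tau>) K" by (rule integrable_pmf_bdd[OF Kb])
  have iR: "integrable (measure_pmf \<tau>) (\<lambda>\<sigma>. (1 / real T) * (\<Sum>d\<in>G. \<bar>M d \<sigma>\<bar>) + 1 / (2 * real N))"
    by (rule integrable_pmf_bdd[OF RHSb])
  have iM: "integrable (measure_pmf \<tau>) (\<lambda>\<sigma>. \<bar>M d \<sigma>\<bar>)" for d
    by (rule integrable_pmf_bdd[where B="real T"]) (use Mb in simp)
  have iN: "integrable (measure_pmf \<tau>) (n d)" for d
    by (rule integrable_pmf_bdd[where B="real T"]) (use nb in simp)
  have B: "measure_pmf.expectation \<tau> K \<le>
      (1 / real T) * (\<Sum>d\<in>G. measure_pmf.expectation \<tau> (\<lambda>\<sigma>. \<bar>M d \<sigma>\<bar>)) + 1 / (2 * real N)"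
  proof -
    have "measure_pmf.expectation \<tau> K \<le> measure_pmf.expectation \<tau> (\<lambda>\<sigma>. (1 / real T) * (\<Sum>d\<in>G. \<bar>M d \<sigma>\<bar>) + 1 / (2 * real N))"
      by (rule integral_mono[OF iK iR A])
    also have "\<dots> = measure_pmf.expectation \<tau> (\<lambda>\<sigma>. (1 / real T) * (\<Sum>d\<in>G. \<bar>M d \<sigma>\<bar>)) + 1 / (2 * real N)"
      by (subst Bochner_Integration.integral_add) (auto intro!: integrable_mult_right integrable_sum iM simp: measure_pmf.prob_space)
    also have "measure_pmf.expectation \<tau> (\<lambda>\<sigma>. (1 / real T) * (\<Sum>d\<in>G. \<bar>M d \<sigma>\<bar>))
        = (1 / real T) * (\<Sum>d\<in>G. measure_pmf.expectation \<tau> (\<lambda>\<sigma>. \<bar>M d \<sigma>\<bar>))"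
      by (simp add: integral_sum iM)
    finally show ?thesis .
  qed
  have C: "measure_pmf.expectation \<tau> (\<lambda>\<sigma>. \<bar>M d \<sigma>\<bar>) \<le> real N * fd N d + measure_pmf.expectation \<tau> (n d) / (4 * real N)"
    if dG: "d \<in> G" for d
  proof -
    let ?Y = "\<lambda>\<sigma>. \<Sum>s<T. if \<phi> (play \<sigma> \<phi> s) = d
            then rain_prob \<tau> (play \<sigma> \<phi> s) * (1 - rain_prob \<tau> (play \<sigma> \<phi> s)) else 0"
    have iY: "integrable (measure_pmf \<tau>) ?Y"
    proof (rule integrable_pmf_bdd[where B="real T"])
      fix \<sigma>
      have "\<bar>?Y \<sigma>\<bar> \<le> (\<Sum>s<T. 1)"
      proof (rule order.trans[OF sum_abs sum_mono])
        fix s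
        show "\<bar>if \<phi> (play \<sigma> \<phi> s) = d then rain_prob \<tau> (play \<sigma> \<phi> s) * (1 - rain_prob \<tau> (play \<sigma> \<phi> s)) else 0\<bar> \<le> 1"
          using rain_prob_bounds[of \<tau> "play \<sigma> \<phi> s"] by (auto simp: abs_mult intro: mult_le_one)
      qed
      then show "\<bar>?Y \<sigma>\<bar> \<le> real T" by simp
    qed
    have Yle: "?Y \<sigma> \<le> fd N d * n d \<sigma>" for \<sigma>
    proof -
      have "?Y \<sigma> \<le> (\<Sum>s<T. fd N d * of_bool (c s \<sigma> = d))"
      proof (rule sum_mono)
        fix s
        show "(if \<phi> (play \<sigma> \<phi> s) = d then rain_prob \<tau> (play \<sigma> \<phi> s) * (1 - rain_prob \<tau> (play \<sigma> \<phi> s)) else 0)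
             \<le> fd N d * of_bool (c s \<sigma> = d)"
        proof (cases "c s \<sigma> = d")
          case True
          have "\<bar>pp s \<sigma> - d\<bar> \<le> 1 / (2 * real N)" using near[of s \<sigma>] True by simp
          from fd_bound[OF N dG[unfolded G_def] this] True show ?thesis unfolding pp_def c_def by simp
        next
          case False then show ?thesis unfolding c_def by simp
        qed
      qed
      also have "\<dots> = fd N d * n d \<sigma>" unfolding n_def by (simp add: sum_distrib_left)
      finally show ?thesis .
    qed
    have "(measure_pmf.expectation \<tau> (\<lambda>\<sigma>. \<bar>M d \<sigma>\<bar>))^2 \<le> measure_pmf.expectation \<tau> (\<lambda>\<sigma>. (M d \<sigma>)^2)"
      by (rule abs_moment[OF Mb])
    also have "\<dots> = measure_pmf.expectation \<tau> ?Y"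
      unfolding M_def by (rule second_moment)
    also have "\<dots> \<le> measure_pmf.expectation \<tau> (\<lambda>\<sigma>. fd N d * n d \<sigma>)"
      by (rule integral_mono[OF iY _ Yle]) (auto intro: integrable_mult_right iN)
    also have "\<dots> = fd N d * measure_pmf.expectation \<tau> (n d)" by simp
    also have "\<dots> \<le> (real N * fd N d + measure_pmf.expectation \<tau> (n d) / (4 * real N))^2"
    proof -
      have e: "fd N d * measure_pmf.expectation \<tau> (n d) = 4 * (real N * fd N d) * (measure_pmf.expectation \<tau> (n d) / (4 * real N))"
        using Npos by (simp add: field_simps)
      have "\<And>x y :: real. 4 * x * y \<le> (x + y)^2"
      proof -
        fix x y :: real
        have "0 \<le> (x - y)^2" by simp
        then show "4 * x * y \<le> (x + y)^2" by (simp add: power2_eq_square algebra_simps)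
      qed
      then show ?thesis unfolding e .
    qed
    finally have sq: "(measure_pmf.expectation \<tau> (\<lambda>\<sigma>. \<bar>M d \<sigma>\<bar>))^2 \<le> (real N * fd N d + measure_pmf.expectation \<tau> (n d) / (4 * real N))^2" .
    have "0 \<le> fd N d" using fd_nonneg[OF N dG[unfolded G_def]] .
    moreover have "0 \<le> measure_pmf.expectation \<tau> (n d)" by (rule integral_nonneg_AE) (use nb in simp)
    ultimately have "0 \<le> real N * fd N d + measure_pmf.expectation \<tau> (n d) / (4 * real N)"
      using Npos by simp
    then show ?thesis by (rule power2_le_imp_le[OF sq])
  qed
  have nE: "(\<Sum>d\<in>G. measure_pmf.expectation \<tau> (n d)) \<le> real T"
  proof -
    have "(\<Sum>d\<in>G. measure_pmf.expectation \<tau> (n d)) = measure_pmf.expectation \<tau> (\<lambda>\<sigma>. \<Sum>d\<in>G. n d \<sigma>)"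
      by (simp add: integral_sum iN)
    also have "\<dots> \<le> measure_pmf.expectation \<tau> (\<lambda>\<sigma>. real T)"
      by (rule integral_mono) (auto intro!: integrable_sum iN nsum)
    also have "\<dots> = real T" by (simp add: measure_pmf.prob_space)
    finally show ?thesis .
  qed
  have D: "(\<Sum>d\<in>G. measure_pmf.expectation \<tau> (\<lambda>\<sigma>. \<bar>M d \<sigma>\<bar>)) \<le> real N * F + real T / (4 * real N)"
  proof -
    have "(\<Sum>d\<in>G. measure_pmf.expectation \<tau> (\<lambda>\<sigma>. \<bar>M d \<sigma>\<bar>))
        \<le> (\<Sum>d\<in>G. real N * fd N d + measure_pmf.expectation \<tau> (n d) / (4 * real N))"
      by (rule sum_mono) (rule C)
    also have "\<dots> = real N * F + (\<Sum>d\<in>G. measure_pmf.expectation \<tau> (n d)) / (4 * real N)"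
      unfolding F_def by (simp add: sum.distrib sum_distrib_left sum_divide_distrib)
    also have "\<dots> \<le> real N * F + real T / (4 * real N)"
      using nE Npos by (simp add: divide_right_mono)
    finally show ?thesis .
  qed
  have hT': "real N * F / real T \<le> 1 / (4 * real N)"
    using hT Npos Tpos unfolding F_def G_def by (simp add: field_simps power2_eq_square)
  have "measure_pmf.expectation \<tau> K \<le> (1 / real T) * (real N * F + real T / (4 * real N)) + 1 / (2 * real N)"
    using B D Tpos by (smt (verit) mult_left_mono divide_nonneg_nonneg of_nat_0_le_iff)
  also have "\<dots> = real N * F / real T + 1 / (4 * real N) + 1 / (2 * real N)"
    using Tpos by (simp add: field_simps)
  also have "\<dots> \<le> 1 / real N"
  proof -
    have "1 / (4 * real N) + 1 / (4 * real N) + 1 / (2 * real N) = 1 / real N" using Npos by (simp add: field_simps)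
    then show ?thesis using hT' by linarith
  qed
  finally show ?thesis unfolding K_def .
qed



theorem mainTheorem5:
  fixes N T :: nat
  assumes "N > 0"
  shows "(\<Sum>d\<in>grid N. fd N d) = real N / 6 + 1 / 4 - 1 / (6 * real N)
       \<and> (real T \<ge> 2/3 * real N ^ 3 + real N ^ 2 - 2/3 * real N \<longrightarrow>
           (\<forall>(\<tau> :: (history \<Rightarrow> bool) pmf) (r :: real \<Rightarrow> real). nearest_rounding N r \<longrightarrow>
              measure_pmf.expectation \<tau>
                (\<lambda>\<sigma>. calib N T (play \<sigma> (\<lambda>h. r (rain_prob \<tau> h)) T)) \<le> 1 / real N))"
proof -
  have P1: "(\<Sum>d\<in>grid N. fd N d) = real N / 6 + 1 / 4 - 1 / (6 * real N)" by (rule part1[OF assms])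
  have P2: "measure_pmf.expectation \<tau> (\<lambda>\<sigma>. calib N T (play \<sigma> (\<lambda>h. r (rain_prob \<tau> h)) T)) \<le> 1 / real N"
    if hT: "real T \<ge> 2/3 * real N ^ 3 + real N ^ 2 - 2/3 * real N" and nr: "nearest_rounding N r"
    for \<tau> :: "(history \<Rightarrow> bool) pmf" and r
  proof -
    have Npos: "0 < real N" using assms by simp
    have N1: "1 \<le> real N" using assms by simp
    have "4 * real N ^ 2 * (\<Sum>d\<in>grid N. fd N d) = 2/3 * real N ^ 3 + real N ^ 2 - 2/3 * real N"
      unfolding P1 using Npos by (simp add: field_simps power2_eq_square power3_eq_cube)
    then have h4: "4 * real N ^ 2 * (\<Sum>d\<in>grid N. fd N d) \<le> real T" using hT by linarith
    have "real N \<le> real N ^ 3"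
    proof -
      have "1 * 1 \<le> real N * real N" using N1 by (intro mult_mono) auto
      then have "real N * 1 \<le> real N * (real N * real N)" using Npos
        by (intro mult_left_mono) auto
      then show ?thesis by (simp add: power3_eq_cube)
    qed
    moreover have "1 \<le> real N ^ 2" using N1 by (simp add: one_le_power)
    ultimately have "1 \<le> real T" using hT by linarith
    then have T: "T > 0" by simp
    show ?thesis by (rule main2[OF assms T h4 nr refl])
  qed
  show ?thesis using P1 P2 by blast
qed


end
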